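(* For every $f\in C_b^*$ there is a sequence $(u_n)\subset K$ such that $u_n\to f$ pointwise on $\mathbb R\times H$ and $\sup_{n,t,x}|u_n(t,x)|\le1+\sup_{t,x}|f(t,x)|$.
   Context: $H$ is a real separable Hilbert space, $T>0$, and $D(A^* )$ is a dense linear subspace of $H$ (the common domain of the adjoint operators $A^*(t)$). $K$ is the set of real parts of elements of the complex linear span of the functions $(t,x)\mapsto\Phi(t)e^{i\langle x,h(t)\rangle}$ on $\mathbb R\times H$, where $\Phi\in C^1(\mathbb R,\mathbb R)$ is $T$-periodic and $h\in C^1(\mathbb R,H)$ is $T$-periodic with values in $D(A^* )$. $C_b^*$ is the set of continuous bounded $f:\mathbb R\times H\to\mathbb R$ that are $T$-periodic in the first variable. *)

theory Defs
  imports "HOL-Analysis.Analysis"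
begin

definition periodic_fun :: "real \<Rightarrow> (real \<Rightarrow> 'a) \<Rightarrow> bool" where
  "periodic_fun T g \<longleftrightarrow> (\<forall>t. g (t + T) = g t)"

definition C1_fun :: "(real \<Rightarrow> 'a::real_normed_vector) \<Rightarrow> bool" where
  "C1_fun g \<longleftrightarrow> (\<exists>g'. (\<forall>t. (g has_vector_derivative g' t) (at t)) \<and> continuous_on UNIV g')"

definition K_gen :: "real \<Rightarrow> 'h::real_inner set \<Rightarrow> (real \<times> 'h \<Rightarrow> complex) set" where
  "K_gen T D = {(\<lambda>(t,x). complex_of_real ((Phi::real \<Rightarrow> real) t) * exp (\<i> * complex_of_real (inner x (h t)))) | Phi h.
      C1_fun Phi \<and> periodic_fun T Phi \<and> C1_fun h \<and> periodic_fun T h \<and> (\<forall>t. h t \<in> D)}"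

text \<open>K: real parts of elements of the complex linear span of the generators
  (written out as finite complex linear combinations).\<close>
definition K_set :: "real \<Rightarrow> 'h::real_inner set \<Rightarrow> (real \<times> 'h \<Rightarrow> real) set" where
  "K_set T D = {(\<lambda>p. Re (\<Sum>j<n. c j * g j p)) | (n::nat) (c::nat \<Rightarrow> complex) g.
      (\<forall>j<n. g j \<in> K_gen T D)}"

definition Cb_star :: "real \<Rightarrow> (real \<times> 'h::real_normed_vector \<Rightarrow> real) set" where
  "Cb_star T = {f. continuous_on UNIV f \<and> bounded (range f) \<and> (\<forall>t x. f (t + T, x) = f (t, x))}"

end

theory Submission
  imports Defs
begin


lemma C1_cont: "C1_fun (f::real \<Rightarrow> 'a::real_normed_vector) \<Longrightarrow> continuous_on UNIV f"
  unfolding C1_fun_def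
  by (metis continuous_at_imp_continuous_on has_vector_derivative_continuous)

lemma C1_const: "C1_fun (\<lambda>t. c)"
  unfolding C1_fun_def
  by (rule exI[of _ "\<lambda>t. 0"]) (auto intro: derivative_eq_intros)

lemma C1_mult:
  fixes f g :: "real \<Rightarrow> real"
  assumes "C1_fun f" "C1_fun g" shows "C1_fun (\<lambda>t. f t * g t)"
proof -
  obtain f' where f': "\<forall>t. (f has_vector_derivative f' t) (at t)" "continuous_on UNIV f'"
    using assms(1) C1_fun_def by blast
  obtain g' where g': "\<forall>t. (g has_vector_derivative g' t) (at t)" "continuous_on UNIV g'"
    using assms(2) C1_fun_def by blast
  have cf: "continuous_on UNIV f" "continuous_on UNIV g" using assms C1_cont by auto
  show ?thesis unfolding C1_fun_def
  proof (intro exI conjI allI)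
    fix t
    have "((\<lambda>t. f t * g t) has_field_derivative f' t * g t + g' t * f t) (at t)"
      using f'(1) g'(1) by (intro DERIV_mult) (auto simp: has_real_derivative_iff_has_vector_derivative)
    then show "((\<lambda>t. f t * g t) has_vector_derivative f' t * g t + g' t * f t) (at t)"
      by (simp add: has_real_derivative_iff_has_vector_derivative)
  next
    show "continuous_on UNIV (\<lambda>t. f' t * g t + g' t * f t)"
      using f'(2) g'(2) cf by (intro continuous_intros) auto
  qed
qed

lemma C1_cos: "C1_fun (\<lambda>t. cos (w * t))"
  unfolding C1_fun_def
proof (intro exI conjI allI)
  fix t
  show "((\<lambda>t. cos (w * t)) has_vector_derivative (- sin (w*t) * w)) (at t)"
    unfolding has_real_derivative_iff_has_vector_derivative[symmetric]
    by (auto intro!: derivative_eq_intros)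
  show "continuous_on UNIV (\<lambda>t. - sin (w*t) * w)" by (intro continuous_intros)
qed

lemma C1_sin: "C1_fun (\<lambda>t. sin (w * t))"
  unfolding C1_fun_def
proof (intro exI conjI allI)
  fix t
  show "((\<lambda>t. sin (w * t)) has_vector_derivative (cos (w*t) * w)) (at t)"
    unfolding has_real_derivative_iff_has_vector_derivative[symmetric]
    by (auto intro!: derivative_eq_intros)
  show "continuous_on UNIV (\<lambda>t. cos (w*t) * w)" by (intro continuous_intros)
qed

lemma periodic_nat: "periodic_fun T g \<Longrightarrow> g (t + real n * T) = g t"
proof (induction n arbitrary: t)
  case (Suc n)
  have "g (t + real (Suc n) * T) = g ((t + real n * T) + T)" by (simp add: algebra_simps)
  also have "\<dots> = g (t + real n * T)" using Suc.prems unfolding periodic_fun_def by blast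
  finally show ?case using Suc by simp
qed simp

lemma periodic_int: "periodic_fun T g \<Longrightarrow> g (t + real_of_int k * T) = g t"
proof (cases "k \<ge> 0")
  case True
  assume p: "periodic_fun T g"
  then show ?thesis using periodic_nat[OF p, of t "nat k"] True by simp
next
  case False
  assume p: "periodic_fun T g"
  have "g (t + real_of_int k * T) = g ((t + real_of_int k * T) + real (nat (-k)) * T)"
    using periodic_nat[OF p, of "t + real_of_int k * T" "nat (-k)"] by simp
  also have "\<dots> = g t" using False by (simp add: algebra_simps)
  finally show ?thesis .
qed

lemma periodic_cos: "T \<noteq> 0 \<Longrightarrow> periodic_fun T (\<lambda>t. cos (2*pi/T * t))"
  unfolding periodic_fun_def
proof
  fix t assume "T \<noteq> 0"
  have "2*pi/T * (t+T) = 2*pi/T*t + 2*pi" using \<open>T\<noteq>0\<close> by (simp add: field_simps)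
  then show "cos (2*pi/T * (t+T)) = cos (2*pi/T*t)" by simp
qed

lemma periodic_sin: "T \<noteq> 0 \<Longrightarrow> periodic_fun T (\<lambda>t. sin (2*pi/T * t))"
  unfolding periodic_fun_def
proof
  fix t assume "T \<noteq> 0"
  have "2*pi/T * (t+T) = 2*pi/T*t + 2*pi" using \<open>T\<noteq>0\<close> by (simp add: field_simps)
  then show "sin (2*pi/T * (t+T)) = sin (2*pi/T*t)" by simp
qed

lemma periodic_const: "periodic_fun T (\<lambda>t. c)" unfolding periodic_fun_def by simp
lemma periodic_mult: "periodic_fun T f \<Longrightarrow> periodic_fun T g \<Longrightarrow> periodic_fun T (\<lambda>t. f t * g t)"
  unfolding periodic_fun_def by simp

lemma periodic_bounded:
  fixes g :: "real \<Rightarrow> real"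
  assumes "T > 0" "periodic_fun T g" "continuous_on UNIV g"
  shows "\<exists>B. \<forall>t. \<bar>g t\<bar> \<le> B"
proof -
  have "compact (g ` {0..T})"
    by (rule compact_continuous_image) (use assms(3) continuous_on_subset in auto)
  then obtain B where B: "\<forall>y\<in>g ` {0..T}. norm y \<le> B"
    using compact_imp_bounded bounded_iff by metis
  show ?thesis
  proof (intro exI allI)
    fix t
    define k where "k = \<lfloor>t / T\<rfloor>"
    define s where "s = t - real_of_int k * T"
    have "real_of_int k \<le> t / T" "t / T < real_of_int k + 1" unfolding k_def by linarith+
    then have "real_of_int k * T \<le> t" "t < real_of_int k * T + T"
      using assms(1) by (auto simp: field_simps)
    then have "s \<in> {0..T}" unfolding s_def by auto
    moreover have "g t = g s"
      using periodic_int[OF assms(2), of s k] unfolding s_def by simp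
    ultimately show "\<bar>g t\<bar> \<le> B" using B by auto
  qed
qed



definition gen :: "real \<Rightarrow> 'h::real_inner set \<Rightarrow> (real \<times> 'h \<Rightarrow> complex) set" where
  "gen T A = {(\<lambda>(t,x). complex_of_real ((Phi::real\<Rightarrow>real) t) * exp (\<i> * complex_of_real (inner x a))) | Phi a.
      C1_fun Phi \<and> periodic_fun T Phi \<and> a \<in> A}"

lemma genI: "C1_fun Phi \<Longrightarrow> periodic_fun T Phi \<Longrightarrow> a \<in> A \<Longrightarrow>
   (\<lambda>(t,x). complex_of_real ((Phi::real\<Rightarrow>real) t) * exp (\<i> * complex_of_real (inner x a))) \<in> gen T A"
  unfolding gen_def by blast

lemma genE:
  assumes "g \<in> gen T A"
  obtains Phi a where "C1_fun Phi" "periodic_fun T Phi" "a \<in> A"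
    "g = (\<lambda>(t,x). complex_of_real ((Phi::real\<Rightarrow>real) t) * exp (\<i> * complex_of_real (inner x a)))"
  using assms unfolding gen_def by blast

lemma gen_mult:
  assumes A: "subspace A" and g1: "g1 \<in> gen T A" and g2: "g2 \<in> gen T A"
  shows "(\<lambda>p. g1 p * g2 p) \<in> gen T A"
proof -
  obtain P1 a1 where 1: "C1_fun P1" "periodic_fun T P1" "a1 \<in> A"
    "g1 = (\<lambda>(t,x). complex_of_real (P1 t) * exp (\<i> * complex_of_real (inner x a1)))"
    using g1 by (rule genE)
  obtain P2 a2 where 2: "C1_fun P2" "periodic_fun T P2" "a2 \<in> A"
    "g2 = (\<lambda>(t,x). complex_of_real (P2 t) * exp (\<i> * complex_of_real (inner x a2)))"
    using g2 by (rule genE)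
  have "(\<lambda>p. g1 p * g2 p) = (\<lambda>(t,x). complex_of_real (P1 t * P2 t) * exp (\<i> * complex_of_real (inner x (a1+a2))))"
    by (auto simp: fun_eq_iff 1(4) 2(4) inner_add_right distrib_left exp_add[symmetric] algebra_simps)
  moreover have "a1 + a2 \<in> A" using A 1(3) 2(3) by (simp add: subspace_add)
  then have "(\<lambda>(t,x). complex_of_real ((\<lambda>t. P1 t * P2 t) t) * exp (\<i> * complex_of_real (inner x (a1+a2)))) \<in> gen T A"
    using 1 2 by (intro genI C1_mult periodic_mult)
  ultimately show ?thesis by simp
qed

lemma gen_cnj:
  assumes A: "subspace A" and g: "g \<in> gen T A"
  shows "(\<lambda>p. cnj (g p)) \<in> gen T A"
proof -
  obtain P a where 1: "C1_fun P" "periodic_fun T P" "a \<in> A"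
    "g = (\<lambda>(t,x). complex_of_real (P t) * exp (\<i> * complex_of_real (inner x a)))"
    using g by (rule genE)
  have "(\<lambda>p. cnj (g p)) = (\<lambda>(t,x). complex_of_real (P t) * exp (\<i> * complex_of_real (inner x (-a))))"
    by (auto simp: fun_eq_iff 1(4) exp_cnj)
  moreover have "-a \<in> A" using A 1(3) by (simp add: subspace_neg)
  then have "(\<lambda>(t,x). complex_of_real (P t) * exp (\<i> * complex_of_real (inner x (-a)))) \<in> gen T A"
    using 1 by (intro genI)
  ultimately show ?thesis by simp
qed

lemma gen_one: "subspace A \<Longrightarrow> (\<lambda>p. 1) \<in> gen T A"
proof -
  assume "subspace A"
  then have "0 \<in> A" by (simp add: subspace_0)
  from genI[OF C1_const periodic_const this, of 1]
  show ?thesis by (simp add: case_prod_unfold)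
qed

lemma gen_Phi: "C1_fun P \<Longrightarrow> periodic_fun T P \<Longrightarrow> subspace A \<Longrightarrow> (\<lambda>p. complex_of_real (P (fst p))) \<in> gen T A"
proof -
  assume "C1_fun P" "periodic_fun T P" "subspace A"
  then have "0 \<in> A" by (simp add: subspace_0)
  from genI[OF \<open>C1_fun P\<close> \<open>periodic_fun T P\<close> this]
  show ?thesis by (simp add: case_prod_unfold)
qed

lemma gen_freq: "subspace A \<Longrightarrow> a \<in> A \<Longrightarrow> (\<lambda>p. exp (\<i> * complex_of_real (inner (snd p) a))) \<in> gen T A"
proof -
  assume "subspace A" "a \<in> A"
  from genI[OF C1_const periodic_const this(2), of 1]
  show ?thesis by (simp add: case_prod_unfold)
qed

lemma gen_cont: "g \<in> gen T A \<Longrightarrow> continuous_on UNIV g"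
proof -
  assume "g \<in> gen T A"
  then obtain P a where 1: "C1_fun P" "g = (\<lambda>(t,x). complex_of_real (P t) * exp (\<i> * complex_of_real (inner x a)))"
    by (metis genE)
  have cP: "continuous_on UNIV P" using 1(1) C1_cont by blast
  have "continuous_on UNIV (\<lambda>p. complex_of_real (P (fst p)) * exp (\<i> * complex_of_real (inner (snd p) a)))"
    by (intro continuous_intros continuous_on_compose2[OF cP]) auto
  then show ?thesis by (simp add: 1(2) case_prod_beta)
qed

lemma gen_bounded: "T > 0 \<Longrightarrow> g \<in> gen T A \<Longrightarrow> \<exists>B. \<forall>p. norm (g p) \<le> B"
proof -
  assume T: "T > 0" and "g \<in> gen T A"
  then obtain P a where 1: "C1_fun P" "periodic_fun T P" "g = (\<lambda>(t,x). complex_of_real (P t) * exp (\<i> * complex_of_real (inner x a)))"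
    by (metis genE)
  obtain B where B: "\<forall>t. \<bar>P t\<bar> \<le> B" using periodic_bounded[OF T 1(2) C1_cont[OF 1(1)]] by blast
  have "norm (g p) \<le> B" for p
    using B by (auto simp: 1(3) norm_mult case_prod_beta)
  then show ?thesis by blast
qed

lemma gen_period: "g \<in> gen T A \<Longrightarrow> g (t + real_of_int k * T, x) = g (t, x)"
proof -
  assume "g \<in> gen T A"
  then obtain P a where 1: "periodic_fun T P" "g = (\<lambda>(t,x). complex_of_real (P t) * exp (\<i> * complex_of_real (inner x a)))"
    by (metis genE)
  show ?thesis using periodic_int[OF 1(1)] by (simp add: 1(2))
qed

lemma gen_inv: "g \<in> gen T A \<Longrightarrow> (\<forall>a\<in>A. inner x a = inner y a) \<Longrightarrow> g (t, x) = g (t, y)"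
proof -
  assume "g \<in> gen T A" and h: "\<forall>a\<in>A. inner x a = inner y a"
  then obtain P a where 1: "a \<in> A" "g = (\<lambda>(t,x). complex_of_real (P t) * exp (\<i> * complex_of_real (inner x a)))"
    by (metis genE)
  show ?thesis using h 1 by simp
qed

lemma gen_K: "A \<subseteq> D \<Longrightarrow> gen T A \<subseteq> K_gen T D"
proof
  fix g assume AD: "A \<subseteq> D" and "g \<in> gen T A"
  from \<open>g \<in> gen T A\<close> obtain P a where 1: "C1_fun P" "periodic_fun T P" "a \<in> A"
    "g = (\<lambda>(t,x). complex_of_real (P t) * exp (\<i> * complex_of_real (inner x a)))"
    by (rule genE)
  have h: "C1_fun (\<lambda>t::real. a)" "periodic_fun T (\<lambda>t::real. a)" "\<forall>t::real. (\<lambda>t. a) t \<in> D"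
    using AD 1(3) by (auto simp: C1_const periodic_fun_def)
  show "g \<in> K_gen T D" unfolding K_gen_def mem_Collect_eq
    by (rule exI[of _ P], rule exI[of _ "\<lambda>t. a"]) (use 1 h in simp)
qed



definition evl :: "(complex \<times> (real \<times> 'h \<Rightarrow> complex)) list \<Rightarrow> real \<times> 'h \<Rightarrow> complex" where
  "evl L p = (\<Sum>(c,g)\<leftarrow>L. c * g p)"

definition CS :: "real \<Rightarrow> 'h::real_inner set \<Rightarrow> (real \<times> 'h \<Rightarrow> complex) set" where
  "CS T A = {evl L | L. \<forall>cg\<in>set L. snd cg \<in> gen T A}"

definition RR :: "real \<Rightarrow> 'h::real_inner set \<Rightarrow> (real \<times> 'h \<Rightarrow> real) set" where
  "RR T A = {(\<lambda>p. Re (F p)) | F. F \<in> CS T A}"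

lemma evl_Nil[simp]: "evl [] p = 0" by (simp add: evl_def)
lemma evl_Cons[simp]: "evl ((c,g)#L) p = c * g p + evl L p" by (simp add: evl_def)
lemma evl_append[simp]: "evl (L1 @ L2) p = evl L1 p + evl L2 p" by (simp add: evl_def)

lemma CSI: "\<forall>cg\<in>set L. snd cg \<in> gen T A \<Longrightarrow> evl L \<in> CS T A" unfolding CS_def by blast
lemma CSE: "F \<in> CS T A \<Longrightarrow> (\<And>L. \<forall>cg\<in>set L. snd cg \<in> gen T A \<Longrightarrow> F = evl L \<Longrightarrow> P) \<Longrightarrow> P"
  unfolding CS_def by blast

lemma CS_add: "F \<in> CS T A \<Longrightarrow> G \<in> CS T A \<Longrightarrow> (\<lambda>p. F p + G p) \<in> CS T A"
proof -
  assume "F \<in> CS T A" "G \<in> CS T A"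
  then obtain L1 L2 where "\<forall>cg\<in>set L1. snd cg \<in> gen T A" "F = evl L1" "\<forall>cg\<in>set L2. snd cg \<in> gen T A" "G = evl L2"
    by (metis CSE)
  moreover have "evl (L1 @ L2) = (\<lambda>p. evl L1 p + evl L2 p)" by (simp add: fun_eq_iff)
  ultimately show ?thesis using CSI[of "L1 @ L2" T A] by auto
qed

lemma evl_scal: "evl (map (\<lambda>(d,g). (c*d, g)) L) p = c * evl L p"
  by (induction L) (auto simp: algebra_simps)

lemma CS_scal: "F \<in> CS T A \<Longrightarrow> (\<lambda>p. c * F p) \<in> CS T A"
proof -
  assume "F \<in> CS T A"
  then obtain L where L: "\<forall>cg\<in>set L. snd cg \<in> gen T A" "F = evl L" by (metis CSE)
  have "\<forall>cg\<in>set (map (\<lambda>(d,g). (c*d, g)) L). snd cg \<in> gen T A" using L(1) by auto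
  moreover have "evl (map (\<lambda>(d,g). (c*d, g)) L) = (\<lambda>p. c * evl L p)" by (simp add: fun_eq_iff evl_scal)
  ultimately show ?thesis using CSI L(2) by metis
qed

lemma CS_gen: "g \<in> gen T A \<Longrightarrow> g \<in> CS T A"
proof -
  assume "g \<in> gen T A"
  then have "evl [(1,g)] \<in> CS T A" by (intro CSI) auto
  moreover have "evl [(1,g)] = g" by (simp add: fun_eq_iff)
  ultimately show ?thesis by simp
qed

lemma CS_const: "subspace A \<Longrightarrow> (\<lambda>p. c) \<in> CS T A"
proof -
  assume "subspace A"
  from CS_scal[OF CS_gen[OF gen_one[OF this]], where c=c]
  show ?thesis by simp
qed

lemma evl_prod1: "evl (map (\<lambda>(d,h). (c*d, \<lambda>p. g p * h p)) L2) p = c * g p * evl L2 p"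
  by (induction L2) (auto simp: algebra_simps)

definition prodl where
  "prodl L1 L2 = concat (map (\<lambda>(c,g). map (\<lambda>(d,h). (c*d, \<lambda>p. g p * h p)) L2) L1)"

lemma evl_prodl: "evl (prodl L1 L2) p = evl L1 p * evl L2 p"
  unfolding prodl_def
  by (induction L1) (auto simp: evl_prod1 algebra_simps)

lemma CS_mult: "subspace A \<Longrightarrow> F \<in> CS T A \<Longrightarrow> G \<in> CS T A \<Longrightarrow> (\<lambda>p. F p * G p) \<in> CS T A"
proof -
  assume A: "subspace A" and "F \<in> CS T A" "G \<in> CS T A"
  then obtain L1 L2 where L: "\<forall>cg\<in>set L1. snd cg \<in> gen T A" "F = evl L1" "\<forall>cg\<in>set L2. snd cg \<in> gen T A" "G = evl L2"
    by (metis CSE)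
  have "\<forall>cg\<in>set (prodl L1 L2). snd cg \<in> gen T A"
    using L(1,3) unfolding prodl_def by (force intro: gen_mult[OF A])
  moreover have "evl (prodl L1 L2) = (\<lambda>p. evl L1 p * evl L2 p)" by (simp add: fun_eq_iff evl_prodl)
  ultimately show ?thesis using CSI L(2,4) by metis
qed

lemma evl_cnj: "evl (map (\<lambda>(c,g). (cnj c, \<lambda>p. cnj (g p))) L) p = cnj (evl L p)"
  by (induction L) auto

lemma CS_cnj: "subspace A \<Longrightarrow> F \<in> CS T A \<Longrightarrow> (\<lambda>p. cnj (F p)) \<in> CS T A"
proof -
  assume A: "subspace A" and "F \<in> CS T A"
  then obtain L where L: "\<forall>cg\<in>set L. snd cg \<in> gen T A" "F = evl L" by (metis CSE)
  have "\<forall>cg\<in>set (map (\<lambda>(c,g). (cnj c, \<lambda>p. cnj (g p))) L). snd cg \<in> gen T A"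
    using L(1) by (force intro: gen_cnj[OF A])
  moreover have "evl (map (\<lambda>(c,g). (cnj c, \<lambda>p. cnj (g p))) L) = (\<lambda>p. cnj (evl L p))" by (simp add: fun_eq_iff evl_cnj)
  ultimately show ?thesis using CSI L(2) by metis
qed

lemma evl_cont: "\<forall>cg\<in>set L. snd cg \<in> gen T A \<Longrightarrow> continuous_on UNIV (evl L)"
proof (induction L)
  case (Cons cg L)
  obtain c g where cg: "cg = (c,g)" by fastforce
  have g: "g \<in> gen T A" using Cons.prems cg by auto
  have "continuous_on UNIV (\<lambda>p. c * g p + evl L p)"
    using gen_cont[OF g] Cons by (intro continuous_intros) auto
  then show ?case by (simp add: cg)
qed (simp add: evl_def)

lemma evl_bounded: "T > 0 \<Longrightarrow> \<forall>cg\<in>set L. snd cg \<in> gen T A \<Longrightarrow> \<exists>B. \<forall>p. norm (evl L p) \<le> B"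
proof (induction L)
  case (Cons cg L)
  obtain c g where cg: "cg = (c,g)" by fastforce
  have g: "g \<in> gen T A" using Cons.prems cg by auto
  obtain B1 where B1: "\<forall>p. norm (g p) \<le> B1" using gen_bounded[OF Cons.prems(1) g] by blast
  obtain B2 where B2: "\<forall>p. norm (evl L p) \<le> B2" using Cons by auto
  have "norm (evl (cg#L) p) \<le> norm c * B1 + B2" for p
  proof -
    have "norm (evl (cg#L) p) \<le> norm c * norm (g p) + norm (evl L p)"
      by (simp add: cg norm_mult[symmetric] norm_triangle_ineq)
    also have "\<dots> \<le> norm c * B1 + B2" using B1 B2 by (intro add_mono mult_left_mono) (auto simp del: split_paired_All)
    finally show ?thesis .
  qed
  then show ?case by blast
qed (auto simp add: evl_def)

lemma evl_period: "\<forall>cg\<in>set L. snd cg \<in> gen T A \<Longrightarrow> evl L (t + real_of_int k * T, x) = evl L (t, x)"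
proof (induction L)
  case (Cons cg L)
  obtain c g where cg: "cg = (c,g)" by fastforce
  have g: "g \<in> gen T A" using Cons.prems cg by auto
  show ?case using gen_period[OF g] Cons by (simp add: cg)
qed (simp add: evl_def)

lemma evl_inv: "\<forall>cg\<in>set L. snd cg \<in> gen T A \<Longrightarrow> \<forall>a\<in>A. inner x a = inner y a \<Longrightarrow> evl L (t, x) = evl L (t, y)"
proof (induction L)
  case (Cons cg L)
  obtain c g where cg: "cg = (c,g)" by fastforce
  have g: "g \<in> gen T A" using Cons.prems cg by auto
  show ?case using gen_inv[OF g Cons.prems(2)] Cons by (simp add: cg)
qed (simp add: evl_def)

lemma CS_props:
  assumes "F \<in> CS T A" "T > 0"
  shows "continuous_on UNIV F" "\<exists>B. \<forall>p. norm (F p) \<le> B"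
    "F (t + real_of_int k * T, x) = F (t, x)"
    "(\<forall>a\<in>A. inner x a = inner y a) \<Longrightarrow> F (t, x) = F (t, y)"
  using assms(1) evl_cont evl_bounded[OF assms(2)] evl_period evl_inv by (metis CSE)+

lemma RRI: "F \<in> CS T A \<Longrightarrow> (\<lambda>p. Re (F p)) \<in> RR T A" unfolding RR_def by blast
lemma RRE: "v \<in> RR T A \<Longrightarrow> (\<And>F. F \<in> CS T A \<Longrightarrow> v = (\<lambda>p. Re (F p)) \<Longrightarrow> P) \<Longrightarrow> P"
  unfolding RR_def by blast

lemma RR_add: "v \<in> RR T A \<Longrightarrow> w \<in> RR T A \<Longrightarrow> (\<lambda>p. v p + w p) \<in> RR T A"
proof -
  assume "v \<in> RR T A" "w \<in> RR T A"
  then obtain F G where "F \<in> CS T A" "G \<in> CS T A" "v = (\<lambda>p. Re (F p))" "w = (\<lambda>p. Re (G p))"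
    by (metis RRE)
  then show ?thesis using RRI[OF CS_add[of F T A G]] by simp
qed

lemma RR_mult: "subspace A \<Longrightarrow> v \<in> RR T A \<Longrightarrow> w \<in> RR T A \<Longrightarrow> (\<lambda>p. v p * w p) \<in> RR T A"
proof -
  assume A: "subspace A" and "v \<in> RR T A" "w \<in> RR T A"
  then obtain F G where FG: "F \<in> CS T A" "G \<in> CS T A" "v = (\<lambda>p. Re (F p))" "w = (\<lambda>p. Re (G p))"
    by (metis RRE)
  have "(\<lambda>p. (1/2) * (F p * G p + F p * cnj (G p))) \<in> CS T A"
    using FG by (intro CS_scal CS_add CS_mult[OF A] CS_cnj[OF A])
  from RRI[OF this] have "(\<lambda>p. Re ((1/2) * (F p * G p + F p * cnj (G p)))) \<in> RR T A" .
  moreover have "Re ((1/2) * (F p * G p + F p * cnj (G p))) = Re (F p) * Re (G p)" for p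
    by (simp add: field_simps)
  ultimately show ?thesis using FG by simp
qed

lemma RR_const: "subspace A \<Longrightarrow> (\<lambda>p. c) \<in> RR T A"
  using RRI[OF CS_const[of A "complex_of_real c" T]] by simp

lemma RR_Phi: "C1_fun P \<Longrightarrow> periodic_fun T P \<Longrightarrow> subspace A \<Longrightarrow> (\<lambda>p. P (fst p)) \<in> RR T A"
  using RRI[OF CS_gen[OF gen_Phi]] by simp

lemma RR_cos: "subspace A \<Longrightarrow> a \<in> A \<Longrightarrow> (\<lambda>p. cos (inner (snd p) a)) \<in> RR T A"
  using RRI[OF CS_gen[OF gen_freq]] by (simp add: Re_exp)

lemma RR_sin: "subspace A \<Longrightarrow> a \<in> A \<Longrightarrow> (\<lambda>p. sin (inner (snd p) a)) \<in> RR T A"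
proof -
  assume "subspace A" "a \<in> A"
  from RRI[OF CS_scal[OF CS_gen[OF gen_freq[OF this]]], of "-\<i>"]
  show ?thesis by (simp add: Re_exp Im_exp)
qed

lemma RR_props:
  assumes "v \<in> RR T A" "T > 0"
  shows "continuous_on UNIV v" "\<exists>B. \<forall>p. \<bar>v p\<bar> \<le> B"
    "v (t + real_of_int k * T, x) = v (t, x)"
    "(\<forall>a\<in>A. inner x a = inner y a) \<Longrightarrow> v (t, x) = v (t, y)"
proof -
  obtain F where F: "F \<in> CS T A" "v = (\<lambda>p. Re (F p))" using assms(1) by (metis RRE)
  show "continuous_on UNIV v" using CS_props(1)[OF F(1) assms(2)] F(2)
    by (auto intro: continuous_intros)
  obtain B where "\<forall>p. norm (F p) \<le> B" using CS_props(2)[OF F(1) assms(2)] by blast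
  then have "\<forall>p. \<bar>v p\<bar> \<le> B" using F(2) abs_Re_le_cmod order_trans by metis
  then show "\<exists>B. \<forall>p. \<bar>v p\<bar> \<le> B" by blast
  show "v (t + real_of_int k * T, x) = v (t, x)" using CS_props(3)[OF F(1) assms(2)] F(2) by simp
  show "(\<forall>a\<in>A. inner x a = inner y a) \<Longrightarrow> v (t, x) = v (t, y)"
  proof -
    assume h: "\<forall>a\<in>A. inner x a = inner y a"
    show ?thesis using CS_props(4)[OF F(1) assms(2) h] F(2) by simp
  qed
qed

lemma evl_nth: "evl L p = (\<Sum>j<length L. fst (L!j) * snd (L!j) p)"
  by (simp add: evl_def sum_list_sum_nth atLeast0LessThan case_prod_unfold)

lemma RR_K: "A \<subseteq> D \<Longrightarrow> RR T A \<subseteq> K_set T D"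
proof
  fix v assume AD: "A \<subseteq> D" and "v \<in> RR T A"
  then obtain F where F: "F \<in> CS T A" "v = (\<lambda>p. Re (F p))" by (metis RRE)
  then obtain L where L: "\<forall>cg\<in>set L. snd cg \<in> gen T A" "F = evl L" by (metis CSE)
  have g: "\<forall>j<length L. snd (L!j) \<in> K_gen T D"
  proof (intro allI impI)
    fix j assume "j < length L"
    then have "L!j \<in> set L" by simp
    then show "snd (L!j) \<in> K_gen T D" using L(1) gen_K[OF AD] by blast
  qed
  have "v = (\<lambda>p. Re (\<Sum>j<length L. (\<lambda>j. fst (L!j)) j * (\<lambda>j. snd (L!j)) j p))"
    using F(2) L(2) by (simp only: fun_eq_iff evl_nth[symmetric]) simp
  then show "v \<in> K_set T D" unfolding K_set_def mem_Collect_eq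
    by (intro exI[of _ "length L"] exI[of _ "\<lambda>j. fst (L!j)"] exI[of _ "\<lambda>j. snd (L!j)"]) (use g in simp)
qed

lemma RR_poly:
  assumes A: "subspace A" and q: "real_polynomial_function q" and v: "v \<in> RR T A"
  shows "(\<lambda>p. q (v p)) \<in> RR T A"
  using q
proof (induction q)
  case (linear f)
  then obtain c where "f = (\<lambda>x. x * c)" by (auto simp: real_bounded_linear)
  then show ?case using RR_mult[OF A v RR_const[OF A]] by simp
next
  case (const c) then show ?case using RR_const[OF A] by simp
next
  case (add f g) then show ?case using RR_add by blast
next
  case (mult f g) then show ?case using RR_mult[OF A] by blast
qed



lemma clamp_lip: "\<bar>max (-K) (min K y) - max (-K) (min K z)\<bar> \<le> \<bar>y - z\<bar>" for K y z :: real
  by (auto simp: max_def min_def)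

lemma approx1:
  fixes f :: "real \<times> 'h::real_inner \<Rightarrow> real"
  assumes T: "T > 0" and A: "subspace A" and S: "compact S" "S \<subseteq> {\<alpha><..<\<alpha>+T}"
    and C: "compact C" "C \<subseteq> A"
    and fc: "continuous_on UNIV f" and M: "\<forall>p. \<bar>f p\<bar> \<le> M" and e: "e > 0"
  shows "\<exists>v\<in>RR T A. (\<forall>p. \<bar>v p\<bar> \<le> M+1) \<and> (\<forall>t\<in>S. \<forall>x\<in>C. \<bar>v (t,x) - f (t,x)\<bar> < e)"
proof -
  define w where "w = 2*pi/T"
  have Rc: "(\<lambda>p. cos (w * fst p)) \<in> RR T A"
    unfolding w_def using RR_Phi[OF C1_cos periodic_cos A] T by simp
  have Rs: "(\<lambda>p. sin (w * fst p)) \<in> RR T A"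
    unfolding w_def using RR_Phi[OF C1_sin periodic_sin A] T by simp
  interpret PR: function_ring_on "RR T A" "S \<times> C"
  proof
    show "compact (S \<times> C)" using S C by (simp add: compact_Times)
  next
    fix v assume "v \<in> RR T A"
    then show "continuous_on (S \<times> C) v" using RR_props(1)[OF _ T] continuous_on_subset by blast
  next
    fix v g assume "v \<in> RR T A" "g \<in> RR T A"
    then show "(\<lambda>x. v x + g x) \<in> RR T A" "(\<lambda>x. v x * g x) \<in> RR T A"
      using RR_add RR_mult[OF A] by auto
  next
    fix c show "(\<lambda>_. c) \<in> RR T A" using RR_const[OF A] .
  next
    fix p q assume p: "p \<in> S \<times> C" and q: "q \<in> S \<times> C" and pq: "p \<noteq> q"
    obtain t x t' x' where pp: "p = (t,x)" and qq: "q = (t',x')" by fastforce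
    show "\<exists>v\<in>RR T A. v p \<noteq> v q"
    proof (cases "t = t'")
      case False
      show ?thesis
      proof (rule ccontr)
        assume "\<not> ?thesis"
        then have "cos (w*t) = cos (w*t')" "sin (w*t) = sin (w*t')"
          using Rc Rs pp qq by force+
        then obtain n :: int where n: "w*t = w*t' + 2*pi*n" using sin_cos_eq_iff by metis
        then have "2*pi*t = 2*pi*(t' + n * T)" unfolding w_def using T by (simp add: field_simps)
        then have "t = t' + n * T" by simp
        moreover have "t \<in> {\<alpha><..<\<alpha>+T}" "t' \<in> {\<alpha><..<\<alpha>+T}" using S(2) p q pp qq by auto
        then have "\<bar>t - t'\<bar> < T" by auto
        ultimately have "\<bar>real_of_int n\<bar> * T < 1 * T" using T by (simp add: abs_mult)
        then have "\<bar>real_of_int n\<bar> < 1" using T by simp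
        then have "n = 0" by linarith
        then show False using \<open>t = t' + n*T\<close> False by simp
      qed
    next
      case True
      then have xx: "x \<noteq> x'" using pq pp qq by simp
      define a :: 'h where "a = x - x'"
      have aA: "a \<in> A" using C(2) p q pp qq a_def by (auto intro: subspace_diff[OF A])
      have a0: "a \<noteq> 0" using xx a_def by simp
      define b :: 'h where "b = (1 / (norm a)^2) *\<^sub>R a"
      have bA: "b \<in> A" unfolding b_def using aA A by (simp add: subspace_scale)
      have ib: "inner x b = inner x' b + 1"
      proof -
        have "inner x b - inner x' b = inner a b" by (simp add: a_def inner_diff_left)
        also have "\<dots> = 1" using a0 by (simp add: b_def power2_norm_eq_inner)
        finally show ?thesis by simp
      qed
      show ?thesis
      proof (rule ccontr)
        assume "\<not> ?thesis"
        then have "cos (inner x b) = cos (inner x' b)" "sin (inner x b) = sin (inner x' b)"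
          using RR_cos[OF A bA] RR_sin[OF A bA] pp qq by force+
        then obtain n :: int where n: "inner x b = inner x' b + 2*pi*n" using sin_cos_eq_iff by metis
        then have n1: "2*pi*n = 1" using ib by simp
        show False
        proof (cases "n = 0")
          case True then show False using n1 by simp
        next
          case False
          then have "\<bar>real_of_int n\<bar> \<ge> 1" by linarith
          then have "\<bar>2*pi*n\<bar> \<ge> 2*pi" by (simp add: abs_mult)
          then show False using n1 pi_gt3 by simp
        qed
      qed
    qed
  qed
  have M0: "M \<ge> 0" using M by (meson abs_ge_zero order_trans)
  obtain g where g: "g \<in> RR T A" "\<forall>p\<in>S\<times>C. \<bar>f p - g p\<bar> < e/2"
    using PR.Stone_Weierstrass_basic[of f "e/2"] fc e continuous_on_subset by (metis half_gt_zero subset_UNIV)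
  obtain B where B: "\<forall>p. \<bar>g p\<bar> \<le> B" using RR_props(2)[OF g(1) T] by blast
  define K where "K = M + 1/2"
  define cl where "cl = (\<lambda>y::real. max (-K) (min K y))"
  have ccl: "continuous_on {-B..B} cl" unfolding cl_def by (intro continuous_intros)
  obtain q where q: "real_polynomial_function q" "\<And>y. y \<in> {-B..B} \<Longrightarrow> \<bar>cl y - q y\<bar> < min (1/2) (e/2)"
    using Stone_Weierstrass_real_polynomial_function[OF compact_Icc ccl, of "min (1/2) (e/2)"] e
    by auto
  define v where "v = (\<lambda>p. q (g p))"
  have vR: "v \<in> RR T A" unfolding v_def by (rule RR_poly[OF A q(1) g(1)])
  have gB: "g p \<in> {-B..B}" for p using B[rule_format, of p] by (auto simp: abs_le_iff)
  have "\<bar>v p\<bar> \<le> M + 1" for p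
  proof -
    have "\<bar>v p - cl (g p)\<bar> < 1/2" using q(2)[OF gB[of p]] unfolding v_def by (simp add: abs_minus_commute)
    moreover have "\<bar>cl (g p)\<bar> \<le> K" unfolding cl_def K_def using M0 by auto
    ultimately show ?thesis unfolding K_def by linarith
  qed
  moreover have "\<bar>v (t,x) - f (t,x)\<bar> < e" if "t \<in> S" "x \<in> C" for t x
  proof -
    have "\<bar>v (t,x) - cl (g (t,x))\<bar> < e/2" using q(2)[OF gB[of "(t,x)"]] unfolding v_def by (simp add: abs_minus_commute)
    moreover have "cl (f (t,x)) = f (t,x)" unfolding cl_def K_def using M[rule_format, of "(t,x)"] by auto
    moreover have "\<bar>cl (g (t,x)) - cl (f (t,x))\<bar> \<le> \<bar>g (t,x) - f (t,x)\<bar>" unfolding cl_def by (rule clamp_lip)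
    moreover have "\<bar>f (t,x) - g (t,x)\<bar> < e/2" using g(2) that by auto
    ultimately show ?thesis by linarith
  qed
  ultimately show ?thesis using vR by blast
qed



lemma reduce: "T > 0 \<Longrightarrow> \<exists>k::int. t + real_of_int k * T \<in> {\<alpha>..<\<alpha>+T}"
proof -
  assume T: "T > 0"
  define k where "k = - \<lfloor>(t - \<alpha>) / T\<rfloor>"
  define fl where "fl = real_of_int \<lfloor>(t - \<alpha>) / T\<rfloor>"
  have a: "fl \<le> (t - \<alpha>) / T" "(t - \<alpha>) / T < fl + 1"
    unfolding fl_def by linarith+
  have "fl * T \<le> t - \<alpha>" using a(1) T by (simp add: le_divide_eq)
  moreover have "t - \<alpha> < (fl + 1) * T" using a(2) T by (simp add: divide_less_eq)
  ultimately have "real_of_int \<lfloor>(t - \<alpha>) / T\<rfloor> * T \<le> t - \<alpha>" "t - \<alpha> < real_of_int \<lfloor>(t - \<alpha>) / T\<rfloor> * T + T"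
    unfolding fl_def by (auto simp: algebra_simps)
  then show ?thesis by (intro exI[of _ k]) (auto simp: k_def algebra_simps)
qed

lemma conv_aux:
  fixes a b x y z :: real
  assumes "a + b = 1"
  shows "a*x + b*y - z = a*(x - z) + b*(y - z)"
proof -
  have "a*(x - z) + b*(y - z) = a*x + b*y - (a+b)*z" by (simp add: algebra_simps)
  then show ?thesis using assms by simp
qed

lemma per_shift:
  assumes "\<And>s k. g (s + real_of_int k * T) = g s" "t + real_of_int k * T = s"
  shows "g t = g s"
  using assms(1)[of s "-k"] assms(2) by (auto simp: algebra_simps)

lemma approx2:
  fixes f :: "real \<times> 'h::real_inner \<Rightarrow> real"
  assumes T: "T > 0" and A: "subspace A" and C: "compact C" "C \<subseteq> A"
    and fc: "continuous_on UNIV f" and M: "\<forall>p. \<bar>f p\<bar> \<le> M"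
    and fp: "\<forall>t x. f (t + T, x) = f (t, x)" and e: "e > 0"
  shows "\<exists>w\<in>RR T A. (\<forall>p. \<bar>w p\<bar> \<le> M+1) \<and> (\<forall>t. \<forall>x\<in>C. \<bar>w (t,x) - f (t,x)\<bar> < e)"
proof -
  have M0: "M \<ge> 0" using M by (meson abs_ge_zero order_trans)
  have fpk: "f (t + real_of_int k * T, x) = f (t, x)" for t k x
    using periodic_int[of T "\<lambda>t. f (t, x)" t k] fp unfolding periodic_fun_def by simp
  define w0 where "w0 = 2*pi/T"
  have cpk: "cos (w0 * (t + real_of_int k * T)) = cos (w0 * t)" for t k
    using periodic_int[OF periodic_cos[of T], of t k] T unfolding w0_def by simp
  define \<eta> where "\<eta> = e / (4 * (2*M+1))"
  have eta: "\<eta> > 0" unfolding \<eta>_def using e M0 by simp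
  have eta2: "\<eta> * (2*M+1) = e/4" unfolding \<eta>_def using M0 by (simp add: field_simps)
  define S1 where "S1 = {0..T} \<inter> {t. cos (w0 * t) \<le> 1 - \<eta>}"
  define S2 where "S2 = {-T/2..T/2} \<inter> {t. cos (w0 * t) \<ge> -1 + \<eta>}"
  have cS1: "compact S1" unfolding S1_def
    by (intro compact_Int_closed compact_Icc closed_Collect_le continuous_intros)
  have cS2: "compact S2" unfolding S2_def
    by (intro compact_Int_closed compact_Icc closed_Collect_le continuous_intros)
  have S1s: "S1 \<subseteq> {0<..<0+T}"
  proof
    fix t assume t: "t \<in> S1"
    have "t \<noteq> 0" using t eta unfolding S1_def by auto
    moreover have "t \<noteq> T" using t eta T unfolding S1_def w0_def by auto
    ultimately show "t \<in> {0<..<0+T}" using t unfolding S1_def by auto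
  qed
  have S2s: "S2 \<subseteq> {-T/2<..<-T/2+T}"
  proof
    fix t assume t: "t \<in> S2"
    have "w0 * (-T/2) = -pi" "w0 * (T/2) = pi" using T unfolding w0_def by (auto simp: field_simps)
    then have "t \<noteq> -T/2" "t \<noteq> T/2" using t eta unfolding S2_def by auto
    then show "t \<in> {-T/2<..<-T/2+T}" using t unfolding S2_def by auto
  qed
  obtain v1 where v1: "v1 \<in> RR T A" "\<forall>p. \<bar>v1 p\<bar> \<le> M+1" "\<forall>t\<in>S1. \<forall>x\<in>C. \<bar>v1 (t,x) - f (t,x)\<bar> < e/2"
    using approx1[OF T A cS1 S1s C fc M, of "e/2"] e by auto
  obtain v2 where v2: "v2 \<in> RR T A" "\<forall>p. \<bar>v2 p\<bar> \<le> M+1" "\<forall>t\<in>S2. \<forall>x\<in>C. \<bar>v2 (t,x) - f (t,x)\<bar> < e/2"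
    using approx1[OF T A cS2 S2s C fc M, of "e/2"] e by auto
  have Rc: "(\<lambda>p. cos (w0 * fst p)) \<in> RR T A"
    unfolding w0_def using RR_Phi[OF C1_cos periodic_cos A] T by simp
  define ch1 :: "real \<times> 'h \<Rightarrow> real" where "ch1 = (\<lambda>p. 1/2 + (-1/2) * cos (w0 * fst p))"
  define ch2 :: "real \<times> 'h \<Rightarrow> real" where "ch2 = (\<lambda>p. 1/2 + (1/2) * cos (w0 * fst p))"
  have ch1R: "ch1 \<in> RR T A" unfolding ch1_def
    by (intro RR_add RR_const[OF A] RR_mult[OF A _ Rc])
  have ch2R: "ch2 \<in> RR T A" unfolding ch2_def
    by (intro RR_add RR_const[OF A] RR_mult[OF A _ Rc])
  have ch: "ch1 p \<ge> 0" "ch2 p \<ge> 0" "ch1 p + ch2 p = 1" for p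
  proof -
    have "cos (w0 * fst p) \<le> 1" "-1 \<le> cos (w0 * fst p)" by simp_all
    then show "ch1 p \<ge> 0" "ch2 p \<ge> 0" "ch1 p + ch2 p = 1" unfolding ch1_def ch2_def by linarith+
  qed
  define w where "w = (\<lambda>p. ch1 p * v1 p + ch2 p * v2 p)"
  have wR: "w \<in> RR T A" unfolding w_def
    by (intro RR_add RR_mult[OF A] ch1R ch2R v1(1) v2(1))
  have wb: "\<bar>w p\<bar> \<le> M+1" for p
  proof -
    have "\<bar>w p\<bar> \<le> ch1 p * \<bar>v1 p\<bar> + ch2 p * \<bar>v2 p\<bar>"
      unfolding w_def using ch(1,2)[of p] by (simp add: abs_mult abs_triangle_ineq[THEN order_trans])
    also have "\<dots> \<le> ch1 p * (M+1) + ch2 p * (M+1)"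
      using ch(1,2)[of p] v1(2)[rule_format, of p] v2(2)[rule_format, of p] by (intro add_mono mult_left_mono) auto
    also have "\<dots> = (ch1 p + ch2 p) * (M+1)" by (simp add: algebra_simps)
    also have "\<dots> = M+1" using ch(3)[of p] by simp
    finally show ?thesis .
  qed
  have we: "\<bar>w (t,x) - f (t,x)\<bar> < e" if x: "x \<in> C" for t x
  proof -
    have v1p: "v1 (t + real_of_int k * T, x) = v1 (t, x)" for t k using RR_props(3)[OF v1(1) T] .
    have v2p: "v2 (t + real_of_int k * T, x) = v2 (t, x)" for t k using RR_props(3)[OF v2(1) T] .
    have t1: "ch1 (t,x) * \<bar>v1 (t,x) - f (t,x)\<bar> \<le> ch1 (t,x) * (e/2) + e/8"
    proof (cases "cos (w0 * t) \<le> 1 - \<eta>")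
      case True
      obtain k :: int where k: "t + real_of_int k * T \<in> {0..<0+T}" using reduce[OF T] by blast
      define s where "s = t + real_of_int k * T"
      have "s \<in> S1" using k True cpk[of t k] unfolding S1_def s_def by auto
      then have "\<bar>v1 (s,x) - f (s,x)\<bar> < e/2" using v1(3) x by auto
      moreover have "v1 (t,x) = v1 (s,x)" "f (t,x) = f (s,x)"
        using per_shift[of "\<lambda>t. v1 (t,x)" T t k s] per_shift[of "\<lambda>t. f (t,x)" T t k s] v1p fpk s_def by auto
      ultimately have "\<bar>v1 (t,x) - f (t,x)\<bar> \<le> e/2" by simp
      then have "ch1 (t,x) * \<bar>v1 (t,x) - f (t,x)\<bar> \<le> ch1 (t,x) * (e/2)"
        using ch(1) by (intro mult_left_mono) auto
      then show ?thesis using e by simp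
    next
      case False
      then have "ch1 (t,x) \<le> \<eta>/2" unfolding ch1_def by simp
      moreover have "\<bar>v1 (t,x) - f (t,x)\<bar> \<le> 2*M+1" using v1(2) M[rule_format, of "(t,x)"] by (smt (verit))
      ultimately have "ch1 (t,x) * \<bar>v1 (t,x) - f (t,x)\<bar> \<le> (\<eta>/2) * (2*M+1)"
        using ch(1) eta by (intro mult_mono) auto
      also have "\<dots> = e/8" using eta2 by simp
      moreover have "0 \<le> ch1 (t,x) * (e/2)" using ch(1)[of "(t,x)"] e by simp
      ultimately show ?thesis by linarith
    qed
    have t2: "ch2 (t,x) * \<bar>v2 (t,x) - f (t,x)\<bar> \<le> ch2 (t,x) * (e/2) + e/8"
    proof (cases "cos (w0 * t) \<ge> -1 + \<eta>")
      case True
      obtain k :: int where k: "t + real_of_int k * T \<in> {-T/2..<-T/2+T}" using reduce[OF T] by blast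
      define s where "s = t + real_of_int k * T"
      have "s \<in> S2" using k True cpk[of t k] unfolding S2_def s_def by auto
      then have "\<bar>v2 (s,x) - f (s,x)\<bar> < e/2" using v2(3) x by auto
      moreover have "v2 (t,x) = v2 (s,x)" "f (t,x) = f (s,x)"
        using per_shift[of "\<lambda>t. v2 (t,x)" T t k s] per_shift[of "\<lambda>t. f (t,x)" T t k s] v2p fpk s_def by auto
      ultimately have "\<bar>v2 (t,x) - f (t,x)\<bar> \<le> e/2" by simp
      then have "ch2 (t,x) * \<bar>v2 (t,x) - f (t,x)\<bar> \<le> ch2 (t,x) * (e/2)"
        using ch(2) by (intro mult_left_mono) auto
      then show ?thesis using e by simp
    next
      case False
      then have "ch2 (t,x) \<le> \<eta>/2" unfolding ch2_def by simp
      moreover have "\<bar>v2 (t,x) - f (t,x)\<bar> \<le> 2*M+1" using v2(2) M[rule_format, of "(t,x)"] by (smt (verit))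
      ultimately have "ch2 (t,x) * \<bar>v2 (t,x) - f (t,x)\<bar> \<le> (\<eta>/2) * (2*M+1)"
        using ch(2) eta by (intro mult_mono) auto
      also have "\<dots> = e/8" using eta2 by simp
      moreover have "0 \<le> ch2 (t,x) * (e/2)" using ch(2)[of "(t,x)"] e by simp
      ultimately show ?thesis by linarith
    qed
    have "w (t,x) - f (t,x) = ch1 (t,x) * (v1 (t,x) - f (t,x)) + ch2 (t,x) * (v2 (t,x) - f (t,x))"
      unfolding w_def by (rule conv_aux[OF ch(3)])
    then have "\<bar>w (t,x) - f (t,x)\<bar> \<le> ch1 (t,x) * \<bar>v1 (t,x) - f (t,x)\<bar> + ch2 (t,x) * \<bar>v2 (t,x) - f (t,x)\<bar>"
      using ch(1,2)[of "(t,x)"] by (simp add: abs_mult abs_triangle_ineq[THEN order_trans])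
    also have "\<dots> \<le> (ch1 (t,x) + ch2 (t,x)) * (e/2) + e/4" using t1 t2 by (simp add: algebra_simps)
    also have "\<dots> < e" using ch(3)[of "(t,x)"] e by simp
    finally show ?thesis .
  qed
  show ?thesis using wR wb we by blast
qed



definition normz :: "'h::real_normed_vector \<Rightarrow> 'h" where "normz v = (1 / norm v) *\<^sub>R v"

function gs :: "(nat \<Rightarrow> 'h::real_inner) \<Rightarrow> nat \<Rightarrow> 'h" where
  "gs d k = normz (d k - (\<Sum>j<k. inner (d k) (gs d j) *\<^sub>R gs d j))"
  by auto
termination by (relation "Wellfounded.measure (\<lambda>(d,k). k)") auto

declare gs.simps[simp del]

lemma normz_cases: "normz v = 0 \<or> inner (normz v) (normz v) = 1"
proof (cases "v = 0")
  case False
  then have "norm (normz v) = 1" by (simp add: normz_def)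
  then show ?thesis by (simp add: power2_norm_eq_inner[symmetric])
qed (simp add: normz_def)

lemma gs_cases: "gs d k = 0 \<or> inner (gs d k) (gs d k) = 1"
proof -
  have "gs d k = normz (d k - (\<Sum>j<k. inner (d k) (gs d j) *\<^sub>R gs d j))" by (rule gs.simps)
  then show ?thesis using normz_cases by metis
qed

lemma inner_sum_orth:
  fixes e :: "nat \<Rightarrow> 'h::real_inner"
  assumes orth: "\<forall>i<n. \<forall>j<n. i \<noteq> j \<longrightarrow> inner (e i) (e j) = 0"
    and cs: "\<forall>i<n. e i = 0 \<or> inner (e i) (e i) = 1" and j: "j < n"
  shows "inner (y - (\<Sum>i<n. inner y (e i) *\<^sub>R e i)) (e j) = 0"
proof -
  have "(\<Sum>i<n. inner y (e i) * inner (e i) (e j)) = (\<Sum>i\<in>{j}. inner y (e i) * inner (e i) (e j))"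
    by (rule sum.mono_neutral_right) (use j orth in auto)
  then have "inner (\<Sum>i<n. inner y (e i) *\<^sub>R e i) (e j) = inner y (e j) * inner (e j) (e j)"
    by (simp add: inner_sum_left)
  moreover have "inner y (e j) * inner (e j) (e j) = inner y (e j)" using cs j by auto
  ultimately show ?thesis by (simp add: inner_diff_left)
qed

lemma gs_orth: "\<forall>i<n. \<forall>j<n. i \<noteq> j \<longrightarrow> inner (gs d i) (gs d j) = 0"
proof (induction n)
  case (Suc n)
  have cs: "\<forall>i<n. gs d i = 0 \<or> inner (gs d i) (gs d i) = 1" using gs_cases by blast
  have new: "inner (gs d n) (gs d j) = 0" if "j < n" for j
  proof -
    have "inner (d n - (\<Sum>i<n. inner (d n) (gs d i) *\<^sub>R gs d i)) (gs d j) = 0"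
      by (rule inner_sum_orth[OF Suc.IH cs that])
    moreover have "gs d n = normz (d n - (\<Sum>i<n. inner (d n) (gs d i) *\<^sub>R gs d i))" by (rule gs.simps)
    ultimately show ?thesis by (simp add: normz_def)
  qed
  show ?case
  proof (intro allI impI)
    fix i j assume "i < Suc n" "j < Suc n" "i \<noteq> j"
    then consider "i < n" "j < n" | "i = n" "j < n" | "j = n" "i < n" by linarith
    then show "inner (gs d i) (gs d j) = 0"
    proof cases
      case 1 then show ?thesis using Suc.IH \<open>i \<noteq> j\<close> by blast
    next
      case 2 then show ?thesis using new by simp
    next
      case 3 then show ?thesis using new[of i] by (simp add: inner_commute)
    qed
  qed
qed simp

lemma gs_in: "subspace D \<Longrightarrow> range d \<subseteq> D \<Longrightarrow> gs d k \<in> D"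
proof (induction k rule: less_induct)
  case (less k)
  have "d k - (\<Sum>j<k. inner (d k) (gs d j) *\<^sub>R gs d j) \<in> D"
    using less by (intro subspace_diff subspace_sum subspace_scale) auto
  moreover have "gs d k = normz (d k - (\<Sum>j<k. inner (d k) (gs d j) *\<^sub>R gs d j))" by (rule gs.simps)
  ultimately show ?case using less.prems by (simp add: normz_def subspace_scale)
qed

lemma gs_span: "d k \<in> span (gs d ` {..k})"
proof -
  define r where "r = d k - (\<Sum>j<k. inner (d k) (gs d j) *\<^sub>R gs d j)"
  have gk: "gs d k = normz r" unfolding r_def by (rule gs.simps)
  have "r = norm r *\<^sub>R gs d k" unfolding gk normz_def by (cases "r = 0") auto
  then have "r \<in> span (gs d ` {..k})" by (metis atMost_iff image_eqI order_refl span_base span_scale)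
  moreover have "(\<Sum>j<k. inner (d k) (gs d j) *\<^sub>R gs d j) \<in> span (gs d ` {..k})"
    by (intro span_sum span_scale span_base) auto
  ultimately have "r + (\<Sum>j<k. inner (d k) (gs d j) *\<^sub>R gs d j) \<in> span (gs d ` {..k})"
    by (rule span_add)
  then show ?thesis unfolding r_def by simp
qed

definition proj :: "(nat \<Rightarrow> 'h::real_inner) \<Rightarrow> nat \<Rightarrow> 'h \<Rightarrow> 'h" where
  "proj e n x = (\<Sum>i<n. inner x (e i) *\<^sub>R e i)"

lemma proj_span: "proj e n x \<in> span (e ` {..<n})"
  unfolding proj_def by (rule span_sum, rule span_scale, rule span_base) auto

lemma proj_orth:
  assumes "a \<in> span (gs d ` {..<n})"
  shows "inner (x - proj (gs d) n x) a = 0"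
proof -
  have sub: "subspace {a. inner (x - proj (gs d) n x) a = 0}"
    by (simp add: subspace_def inner_add_right)
  have b: "inner (x - proj (gs d) n x) y = 0" if yy: "y \<in> gs d ` {..<n}" for y
  proof -
    obtain j where "j < n" "y = gs d j" using yy by blast
    have cs: "\<forall>i<n. gs d i = 0 \<or> inner (gs d i) (gs d i) = 1" using gs_cases by blast
    show ?thesis unfolding proj_def \<open>y = gs d j\<close>
      by (rule inner_sum_orth[OF gs_orth cs \<open>j<n\<close>])
  qed
  show ?thesis using span_induct[OF assms sub] b by blast
qed

lemma proj_inner: "a \<in> span (gs d ` {..<n}) \<Longrightarrow> inner (proj (gs d) n x) a = inner x a"
  using proj_orth[of a d n x] by (simp add: inner_diff_left)

lemma proj_min:
  assumes "y \<in> span (gs d ` {..<n})"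
  shows "norm (x - proj (gs d) n x) \<le> norm (x - y)"
proof -
  have "proj (gs d) n x - y \<in> span (gs d ` {..<n})" by (rule span_diff[OF proj_span assms])
  then have o: "inner (x - proj (gs d) n x) (proj (gs d) n x - y) = 0" by (rule proj_orth)
  have "orthogonal (x - proj (gs d) n x) (proj (gs d) n x - y)" using o by (simp add: orthogonal_def)
  then have "(norm ((x - proj (gs d) n x) + (proj (gs d) n x - y)))^2 = (norm (x - proj (gs d) n x))^2 + (norm (proj (gs d) n x - y))^2"
    by (rule norm_add_Pythagorean)
  then have "(norm (x - y))^2 = (norm (x - proj (gs d) n x))^2 + (norm (proj (gs d) n x - y))^2"
    by simp
  then have "(norm (x - proj (gs d) n x))^2 \<le> (norm (x - y))^2" by simp
  then show ?thesis by (rule power2_le_imp_le) simp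
qed

lemma gs_norm_le: "norm (gs d k) \<le> 1"
  using gs_cases[of d k] by (auto simp: norm_eq_sqrt_inner)

lemma coeff_le: "\<bar>inner x (gs d i)\<bar> \<le> norm x"
proof -
  have "\<bar>inner x (gs d i)\<bar> \<le> norm x * norm (gs d i)" by (rule Cauchy_Schwarz_ineq2)
  also have "\<dots> \<le> norm x * 1" using gs_norm_le by (intro mult_left_mono) auto
  finally show ?thesis by simp
qed

definition Bx :: "(nat \<Rightarrow> 'h::real_inner) \<Rightarrow> real \<Rightarrow> nat \<Rightarrow> 'h set" where
  "Bx e R n = {(\<Sum>i<n. c i *\<^sub>R e i) | c. \<forall>i<n. \<bar>c i\<bar> \<le> R}"

lemma BxI: "\<forall>i<n. \<bar>c i\<bar> \<le> R \<Longrightarrow> (\<Sum>i<n. c i *\<^sub>R e i) \<in> Bx e R n"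
  unfolding Bx_def mem_Collect_eq by (intro exI[of _ c]) simp

lemma BxE: "y \<in> Bx e R n \<Longrightarrow> (\<And>c. y = (\<Sum>i<n. c i *\<^sub>R e i) \<Longrightarrow> \<forall>i<n. \<bar>c i\<bar> \<le> R \<Longrightarrow> P) \<Longrightarrow> P"
  unfolding Bx_def mem_Collect_eq by metis

lemma Bx_Suc: "Bx e R (Suc n) = (\<lambda>(y,r). y + r *\<^sub>R e n) ` (Bx e R n \<times> {-R..R})"
proof (intro equalityI subsetI)
  fix z assume "z \<in> Bx e R (Suc n)"
  then obtain c where c: "z = (\<Sum>i<Suc n. c i *\<^sub>R e i)" "\<forall>i<Suc n. \<bar>c i\<bar> \<le> R" by (rule BxE)
  have yB: "(\<Sum>i<n. c i *\<^sub>R e i) \<in> Bx e R n" using c(2) by (intro BxI) simp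
  have cn: "c n \<in> {-R..R}" using c(2)[rule_format, of n] by (simp add: abs_le_iff)
  have "z = (\<lambda>(y,r). y + r *\<^sub>R e n) ((\<Sum>i<n. c i *\<^sub>R e i), c n)" using c(1) by simp
  then show "z \<in> (\<lambda>(y,r). y + r *\<^sub>R e n) ` (Bx e R n \<times> {-R..R})"
    by (rule image_eqI) (use yB cn in simp)
next
  fix z assume "z \<in> (\<lambda>(y,r). y + r *\<^sub>R e n) ` (Bx e R n \<times> {-R..R})"
  then obtain p where p: "p \<in> Bx e R n \<times> {-R..R}" "z = (\<lambda>(y,r). y + r *\<^sub>R e n) p" by (rule imageE)
  obtain y r where "p = (y, r)" by fastforce
  then have yr: "y \<in> Bx e R n" "r \<in> {-R..R}" "z = y + r *\<^sub>R e n" using p by auto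
  obtain c where c: "y = (\<Sum>i<n. c i *\<^sub>R e i)" "\<forall>i<n. \<bar>c i\<bar> \<le> R" using yr(1) by (rule BxE)
  define c' where "c' = c(n := r)"
  have "(\<Sum>i<n. c' i *\<^sub>R e i) = (\<Sum>i<n. c i *\<^sub>R e i)" unfolding c'_def by (intro sum.cong) auto
  then have zeq: "z = (\<Sum>i<Suc n. c' i *\<^sub>R e i)" using c(1) yr(3) unfolding c'_def by simp
  have bd: "\<forall>i<Suc n. \<bar>c' i\<bar> \<le> R"
  proof (intro allI impI)
    fix i assume "i < Suc n"
    then consider "i < n" | "i = n" by linarith
    then show "\<bar>c' i\<bar> \<le> R"
    proof cases
      case 1 then have "c' i = c i" unfolding c'_def by simp
      then show ?thesis using c(2) 1 by simp
    next
      case 2 then have "c' i = r" unfolding c'_def by simp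
      then show ?thesis using yr(2) by (simp add: abs_le_iff)
    qed
  qed
  show "z \<in> Bx e R (Suc n)" unfolding zeq by (rule BxI[OF bd])
qed

lemma Bx_compact: "compact (Bx e R n)"
proof (induction n)
  case 0
  have "Bx e R 0 = {0}" unfolding Bx_def by simp
  then show ?case by simp
next
  case (Suc n)
  have c: "continuous_on (Bx e R n \<times> {-R..R}) (\<lambda>(y,r). y + r *\<^sub>R e n)"
    unfolding case_prod_unfold by (intro continuous_intros)
  show ?case unfolding Bx_Suc
    by (intro compact_continuous_image compact_Times Suc compact_Icc c)
qed

lemma Bx_span: "Bx e R n \<subseteq> span (e ` {..<n})"
proof
  fix z assume "z \<in> Bx e R n"
  then obtain c where "z = (\<Sum>i<n. c i *\<^sub>R e i)" by (rule BxE)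
  moreover have "(\<Sum>i<n. c i *\<^sub>R e i) \<in> span (e ` {..<n})"
    by (rule span_sum, rule span_scale, rule span_base) auto
  ultimately show "z \<in> span (e ` {..<n})" by simp
qed

lemma proj_Bx: "norm x \<le> R \<Longrightarrow> proj (gs d) n x \<in> Bx (gs d) R n"
proof -
  assume "norm x \<le> R"
  then have "\<forall>i<n. \<bar>inner x (gs d i)\<bar> \<le> R" using coeff_le order_trans by blast
  then show ?thesis unfolding proj_def by (rule BxI)
qed



lemma dense_seq:
  fixes D :: "'h::{real_inner, second_countable_topology} set"
  assumes cl: "closure D = UNIV" and ne: "D \<noteq> {}"
  shows "\<exists>d::nat \<Rightarrow> 'h. range d \<subseteq> D \<and> (\<forall>x. \<forall>\<epsilon>>0. \<exists>k. dist x (d k) < \<epsilon>)"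
proof -
  obtain E :: "'h set" where E: "countable E" "\<And>X. open X \<Longrightarrow> X \<noteq> {} \<Longrightarrow> \<exists>y\<in>E. y \<in> X"
    using countable_dense_exists by blast
  have ap: "\<exists>z. z \<in> D \<and> dist y z < \<epsilon>" if "\<epsilon> > 0" for y \<epsilon>
    using closure_approachableD[of y D \<epsilon>] cl that by auto
  define h where "h = (\<lambda>(y, k::nat). SOME z. z \<in> D \<and> dist y z < inverse (real (Suc k)))"
  have hD: "h (y,k) \<in> D \<and> dist y (h (y,k)) < inverse (real (Suc k))" for y k
    unfolding h_def using someI_ex[OF ap[of "inverse (real (Suc k))" y]] by simp
  define F where "F = h ` (E \<times> UNIV)"
  have cF: "countable F" unfolding F_def using E(1) by simp
  have "E \<noteq> {}" using E(2)[of UNIV] by auto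
  then have neF: "F \<noteq> {}" unfolding F_def by auto
  define d where "d = from_nat_into F"
  have rd: "range d = F" unfolding d_def using neF cF by simp
  have "range d \<subseteq> D" unfolding rd F_def using hD by auto
  moreover have "\<exists>k. dist x (d k) < \<epsilon>" if eps: "\<epsilon> > 0" for x \<epsilon>
  proof -
    have "\<exists>y\<in>E. y \<in> ball x (\<epsilon>/2)" using E(2)[of "ball x (\<epsilon>/2)"] eps by simp
    then obtain y where y: "y \<in> E" "y \<in> ball x (\<epsilon>/2)" by blast
    obtain k where k: "inverse (real (Suc k)) < \<epsilon>/2" using reals_Archimedean[of "\<epsilon>/2"] eps by auto
    have "h (y,k) \<in> F" unfolding F_def using y(1) by auto
    then obtain k' where k': "d k' = h (y,k)" using rd by (metis imageE)
    have "dist x (h (y,k)) \<le> dist x y + dist y (h (y,k))" by (rule dist_triangle)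
    also have "\<dots> < \<epsilon>" using y(2) hD[of y k] k by (simp add: dist_commute)
    finally show ?thesis using k' by metis
  qed
  ultimately show ?thesis by blast
qed

theorem mainTheorem19:
  fixes T :: real
    and D :: "'h::{real_inner, complete_space, second_countable_topology} set"
    and f :: "real \<times> 'h \<Rightarrow> real"
  assumes "T > 0"
    and "subspace D"
    and "closure D = UNIV"
    and "f \<in> Cb_star T"
  shows "\<exists>u :: nat \<Rightarrow> real \<times> 'h \<Rightarrow> real.
           (\<forall>n. u n \<in> K_set T D) \<and>
           (\<forall>p. (\<lambda>n. u n p) \<longlonglongrightarrow> f p) \<and>
           (\<forall>n p. \<bar>u n p\<bar> \<le> 1 + (SUP q. \<bar>f q\<bar>))"
proof -
  note T = assms(1)
  have fc: "continuous_on UNIV f" and fb: "bounded (range f)" and fp: "\<forall>t x. f (t + T, x) = f (t, x)"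
    using assms(4) unfolding Cb_star_def by auto
  obtain B where B: "\<forall>y\<in>range f. norm y \<le> B" using fb bounded_iff by blast
  define M where "M = (SUP q. \<bar>f q\<bar>)"
  have bdd: "bdd_above ((\<lambda>q. \<bar>f q\<bar>) ` UNIV)" using B by (intro bdd_aboveI2[of _ _ B]) auto
  have fM: "\<forall>p. \<bar>f p\<bar> \<le> M" unfolding M_def using cSUP_upper[OF _ bdd] by blast
  have "0 \<in> D" using assms(2) by (simp add: subspace_0)
  then obtain d :: "nat \<Rightarrow> 'h" where d: "range d \<subseteq> D" "\<forall>x. \<forall>\<epsilon>>0. \<exists>k. dist x (d k) < \<epsilon>"
    using dense_seq[OF assms(3)] by blast
  define e where "e = gs d"
  define A where "A n = span (e ` {..<n})" for n
  have eD: "e ` {..<n} \<subseteq> D" for n unfolding e_def using gs_in[OF assms(2) d(1)] by auto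
  have AD: "A n \<subseteq> D" for n unfolding A_def by (rule span_minimal[OF eD assms(2)])
  have sA: "subspace (A n)" for n unfolding A_def by (rule subspace_span)
  define C where "C n = Bx e (real n) n" for n
  have cC: "compact (C n)" for n unfolding C_def by (rule Bx_compact)
  have CA: "C n \<subseteq> A n" for n unfolding C_def A_def by (rule Bx_span)
  define P where "P n = (\<lambda>w. w \<in> RR T (A n) \<and> (\<forall>p. \<bar>w p\<bar> \<le> M+1) \<and>
      (\<forall>t. \<forall>x\<in>C n. \<bar>w (t,x) - f (t,x)\<bar> < inverse (real (Suc n))))" for n
  have exP: "\<exists>w. P n w" for n
    using approx2[OF T sA[of n] cC[of n] CA[of n] fc fM fp, of "inverse (real (Suc n))"]
    unfolding P_def by auto
  define u where "u n = (SOME w. P n w)" for n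
  have uP: "P n (u n)" for n unfolding u_def using someI_ex[OF exP] by blast
  have uR: "u n \<in> RR T (A n)" for n using uP[of n] unfolding P_def by blast
  have ub: "\<bar>u n p\<bar> \<le> M+1" for n p using uP[of n] unfolding P_def by blast
  have ua: "\<bar>u n (t,x) - f (t,x)\<bar> < inverse (real (Suc n))" if "x \<in> C n" for n t x
    using uP[of n] that unfolding P_def by blast
  have uK: "u n \<in> K_set T D" for n using RR_K[OF AD[of n]] uR[of n] by blast
  have conv: "(\<lambda>n. u n p) \<longlonglongrightarrow> f p" for p
  proof -
    obtain t x where p: "p = (t,x)" by fastforce
    have Pconv: "(\<lambda>n. proj e n x) \<longlonglongrightarrow> x"
      unfolding lim_sequentially
    proof (intro allI impI)
      fix r :: real assume r: "r > 0"
      obtain k where k: "dist x (d k) < r" using d(2) r by blast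
      have "norm (x - proj e n x) < r" if "n \<ge> Suc k" for n
      proof -
        have "d k \<in> span (e ` {..k})" unfolding e_def by (rule gs_span)
        moreover have "span (e ` {..k}) \<subseteq> span (e ` {..<n})"
          using that by (intro span_mono image_mono) auto
        ultimately have "d k \<in> span (gs d ` {..<n})" unfolding e_def by blast
        then have "norm (x - proj (gs d) n x) \<le> norm (x - d k)" by (rule proj_min)
        then show ?thesis using k unfolding e_def by (simp add: dist_norm)
      qed
      then show "\<exists>no. \<forall>n\<ge>no. dist (proj e n x) x < r"
        by (metis dist_commute dist_norm)
    qed
    have icf: "isCont f (t,x)" using fc continuous_on_eq_continuous_at[OF open_UNIV] by blast
    have fconv: "(\<lambda>n. f (t, proj e n x)) \<longlonglongrightarrow> f (t,x)"
      by (rule isCont_tendsto_compose[OF icf]) (intro tendsto_Pair tendsto_const Pconv)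
    have g0: "(\<lambda>n. inverse (real (Suc n)) + \<bar>f (t, proj e n x) - f (t,x)\<bar>) \<longlonglongrightarrow> 0"
    proof -
      have "(\<lambda>n. \<bar>f (t, proj e n x) - f (t,x)\<bar>) \<longlonglongrightarrow> \<bar>f (t,x) - f (t,x)\<bar>"
        by (intro tendsto_rabs tendsto_diff fconv tendsto_const)
      then have "(\<lambda>n. inverse (real (Suc n)) + \<bar>f (t, proj e n x) - f (t,x)\<bar>) \<longlonglongrightarrow> 0 + 0"
        by (intro tendsto_add LIMSEQ_inverse_real_of_nat) simp
      then show ?thesis by simp
    qed
    have ev: "eventually (\<lambda>n. norm (u n (t,x) - f (t,x)) \<le> inverse (real (Suc n)) + \<bar>f (t, proj e n x) - f (t,x)\<bar>) sequentially"
      unfolding eventually_sequentially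
    proof (intro exI allI impI)
      fix n assume n: "n \<ge> nat \<lceil>norm x\<rceil>"
      then have "norm x \<le> real n" by linarith
      then have inC: "proj e n x \<in> C n" unfolding C_def e_def by (rule proj_Bx)
      have "\<forall>a\<in>A n. inner x a = inner (proj e n x) a"
        unfolding A_def e_def using proj_inner by metis
      then have "u n (t,x) = u n (t, proj e n x)" by (rule RR_props(4)[OF uR T])
      then have "\<bar>u n (t,x) - f (t,x)\<bar> \<le> \<bar>u n (t, proj e n x) - f (t, proj e n x)\<bar> + \<bar>f (t, proj e n x) - f (t,x)\<bar>"
        by linarith
      also have "\<dots> \<le> inverse (real (Suc n)) + \<bar>f (t, proj e n x) - f (t,x)\<bar>"
        using ua[OF inC, of t] by linarith
      finally show "norm (u n (t,x) - f (t,x)) \<le> inverse (real (Suc n)) + \<bar>f (t, proj e n x) - f (t,x)\<bar>"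
        by simp
    qed
    have "(\<lambda>n. u n (t,x) - f (t,x)) \<longlonglongrightarrow> 0" by (rule Lim_null_comparison[OF ev g0])
    then show ?thesis unfolding p by (rule LIM_zero_cancel)
  qed
  show ?thesis
  proof (intro exI[of _ u] conjI allI uK conv)
    fix n p
    show "\<bar>u n p\<bar> \<le> 1 + (SUP q. \<bar>f q\<bar>)" using ub[of n p] unfolding M_def by linarith
  qed
qed

end
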